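(* Define $A(n_1,n_2,n_3,n_4)$ for $n_1,\dots,n_4 \in \mathbb{Z}_{\geq 0}$ by $$\frac{1}{(1 - x_1 - x_2)(1 - x_3 - x_4) - x_1 x_2 x_3 x_4} = \sum_{n_1,n_2,n_3,n_4 \geq 0} A(n_1,n_2,n_3,n_4)\, x_1^{n_1}x_2^{n_2}x_3^{n_3}x_4^{n_4}.$$ Then for all $n_1,\dots,n_4 \geq 0$, $$A(n_1,n_2,n_3,n_4) = \sum_{k \in \mathbb{Z}} \binom{n_1}{k}\binom{n_3}{k}\binom{n_1+n_2-k}{n_1}\binom{n_3+n_4-k}{n_3},$$ and moreover $A(n_1,n_2,n_3,n_4)$ is the constant term of the Laurent polynomial $$\frac{(x_1+x_2+x_3)^{n_1}(x_1+x_2)^{n_2}(x_3+x_4)^{n_3}(x_2+x_3+x_4)^{n_4}}{x_1^{n_1}x_2^{n_2}x_3^{n_3}x_4^{n_4}}.$$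
   Context: Binomial coefficients with integer entries are the usual ones; $\binom{n}{k}=0$ for $k<0$ or $k>n$ when $n \ge 0$. *)

theory Defs
  imports Main "HOL-Library.Function_Algebras"
begin

text \<open>Formal power series (and polynomials) in four commuting variables
  x1,x2,x3,x4 with integer coefficients, represented by their coefficient
  functions: f (a,b,c,d) is the coefficient of x1^a x2^b x3^c x4^d.
  Addition/subtraction are pointwise (the function-space instances).\<close>

type_synonym ps4 = "nat \<times> nat \<times> nat \<times> nat \<Rightarrow> int"

definition ps_mult :: "ps4 \<Rightarrow> ps4 \<Rightarrow> ps4" where
  "ps_mult f g = (\<lambda>(a,b,c,d). \<Sum>i\<le>a. \<Sum>j\<le>b. \<Sum>k\<le>c. \<Sum>l\<le>d.
      f (i,j,k,l) * g (a-i, b-j, c-k, d-l))"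

definition ps_mono :: "nat \<times> nat \<times> nat \<times> nat \<Rightarrow> ps4" where
  "ps_mono m = (\<lambda>n. if n = m then 1 else 0)"

definition ps_one :: ps4 where
  "ps_one = ps_mono (0,0,0,0)"

definition x1 :: ps4 where "x1 = ps_mono (1,0,0,0)"
definition x2 :: ps4 where "x2 = ps_mono (0,1,0,0)"
definition x3 :: ps4 where "x3 = ps_mono (0,0,1,0)"
definition x4 :: ps4 where "x4 = ps_mono (0,0,0,1)"

definition ps_pow :: "ps4 \<Rightarrow> nat \<Rightarrow> ps4" where
  "ps_pow f n = (ps_mult f ^^ n) ps_one"

definition denomA :: ps4 where
  "denomA = ps_mult (ps_one - x1 - x2) (ps_one - x3 - x4)
            - ps_mult (ps_mult x1 x2) (ps_mult x3 x4)"

definition coeffA :: ps4 where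
  "coeffA = (THE a. ps_mult denomA a = ps_one)"

definition numerA :: "nat \<Rightarrow> nat \<Rightarrow> nat \<Rightarrow> nat \<Rightarrow> ps4" where
  "numerA n1 n2 n3 n4 =
     ps_mult (ps_mult (ps_pow (x1 + x2 + x3) n1) (ps_pow (x1 + x2) n2))
             (ps_mult (ps_pow (x3 + x4) n3) (ps_pow (x2 + x3 + x4) n4))"

end

theory Submission
  imports Defs "HOL-Computational_Algebra.Formal_Power_Series"
begin
unbundle fps_syntax


definition T :: "nat \<Rightarrow> nat \<Rightarrow> nat \<Rightarrow> nat" where
  "T p q r = ((p+q+r) choose p) * ((q+r) choose q)"

lemma T_rec: "T (Suc p) q r = T p q r + (if q > 0 then T (Suc p) (q-1) r else 0)
   + (if r > 0 then T (Suc p) q (r-1) else 0)"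
proof -
  have a: "T (Suc p) q r = T p q r + ((p+q+r) choose Suc p) * ((q+r) choose q)"
    unfolding T_def by (simp add: algebra_simps)
  have b: "((p+q+r) choose Suc p) * ((q+r) choose q) =
     (if q > 0 then T (Suc p) (q-1) r else 0) + (if r > 0 then T (Suc p) q (r-1) else 0)"
  proof (cases q)
    case 0
    then show ?thesis
    proof (cases r)
      case 0 with \<open>q=0\<close> show ?thesis by simp
    next
      case (Suc r') with \<open>q=0\<close> show ?thesis by (simp add: T_def)
    qed
  next
    case (Suc q')
    then show ?thesis
    proof (cases r)
      case 0 with Suc show ?thesis by (simp add: T_def)
    next
      case (Suc r')
      have "(Suc q' + Suc r') choose Suc q' = ((q' + Suc r') choose q') + ((q'+Suc r') choose (Suc q'))"
        by simp
      with Suc \<open>q = Suc q'\<close> show ?thesis by (simp add: T_def algebra_simps)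
    qed
  qed
  from a b show ?thesis by simp
qed

definition P :: "nat \<Rightarrow> nat \<Rightarrow> nat \<Rightarrow> nat" where
  "P a b k = (a choose k) * ((a + b - k) choose a)"

lemma P_T: "P a b k = (if k \<le> a \<and> k \<le> b then T k (a-k) (b-k) else 0)"
proof (cases "k \<le> a \<and> k \<le> b")
  case True
  have "((a+b-k) choose a) * (a choose k) = ((a+b-k) choose k) * ((a+b-k-k) choose (a-k))"
    using True by (intro choose_mult) auto
  moreover have "k + (a-k) + (b-k) = a+b-k" "(a-k)+(b-k) = a+b-k-k" using True by auto
  ultimately show ?thesis using True by (simp add: P_def T_def mult.commute)
next
  case False
  then show ?thesis by (auto simp: P_def)
qed

lemma P_rec: "P (Suc a) (Suc b) (Suc k) = P a (Suc b) (Suc k) + P (Suc a) b (Suc k) + P a b k"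
proof (cases "k \<le> a \<and> k \<le> b")
  case True
  have "T (Suc k) (a-k) (b-k) = T k (a-k) (b-k) + (if a-k > 0 then T (Suc k) (a-k-1) (b-k) else 0)
   + (if b-k > 0 then T (Suc k) (a-k) (b-k-1) else 0)" by (rule T_rec)
  then show ?thesis using True by (auto simp: P_T Suc_diff_Suc)
next
  case False
  then show ?thesis by (auto simp: P_T)
qed

lemma P_zero_left: "P 0 b k = (if k = 0 then 1 else 0)" by (simp add: P_def)
lemma P_zero_right: "P a 0 k = (if k = 0 then 1 else 0)" by (auto simp: P_T T_def)
lemma P_big: "k > a \<Longrightarrow> P a b k = 0" by (simp add: P_def)
lemma T_sym: "T p q r = T p r q"
proof -
  have "(q+r) choose q = (q+r) choose r" using binomial_symmetric[of q "q+r"] by simp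
  then show ?thesis by (simp add: T_def algebra_simps)
qed
lemma P_sym: "P a b k = P b a k"
  using T_sym by (simp add: P_T conj_commute)




type_synonym F4 = "int fps fps fps fps"

definition emb :: "ps4 \<Rightarrow> F4" where
  "emb f = Abs_fps (\<lambda>a. Abs_fps (\<lambda>b. Abs_fps (\<lambda>c. Abs_fps (\<lambda>d. f (a,b,c,d)))))"

definition cf :: "F4 \<Rightarrow> ps4" where
  "cf F = (\<lambda>(a,b,c,d). F $ a $ b $ c $ d)"

lemma cf_emb[simp]: "cf (emb f) = f"
  by (auto simp: cf_def emb_def)

lemma emb_cf[simp]: "emb (cf F) = F"
  by (simp add: cf_def emb_def fps_eq_iff)

lemma emb_inj: "emb f = emb g \<Longrightarrow> f = g"
  by (metis cf_emb)

lemma cf_apply: "cf F (a,b,c,d) = F $ a $ b $ c $ d" by (simp add: cf_def)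

lemma cf_add[simp]: "cf (F + G) = cf F + cf G"
  by (auto simp: cf_def)
lemma cf_diff[simp]: "cf (F - G) = cf F - cf G"
  by (auto simp: cf_def)

lemma emb_add: "emb (f + g) = emb f + emb g"
  by (metis cf_add cf_emb emb_cf)
lemma emb_diff: "emb (f - g) = emb f - emb g"
  by (metis cf_diff cf_emb emb_cf)

lemma cf_mult: "cf (F * G) = ps_mult (cf F) (cf G)"
  by (auto simp: cf_def ps_mult_def fps_mult_nth fps_sum_nth atLeast0AtMost)

lemma emb_mult: "emb (ps_mult f g) = emb f * emb g"
  by (metis cf_mult cf_emb emb_cf)

lemma emb_one: "emb ps_one = 1"
  by (auto simp: emb_def ps_one_def ps_mono_def fps_eq_iff)

definition "X1 = (fps_X :: F4)"
definition "X2 = (fps_const fps_X :: F4)"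
definition "X3 = (fps_const (fps_const fps_X) :: F4)"
definition "X4 = (fps_const (fps_const (fps_const fps_X)) :: F4)"

lemma emb_x1: "emb x1 = X1"
  by (auto simp: emb_def x1_def X1_def ps_mono_def fps_eq_iff fps_X_def)
lemma emb_x2: "emb x2 = X2"
  by (auto simp: emb_def x2_def X2_def ps_mono_def fps_eq_iff fps_X_def)
lemma emb_x3: "emb x3 = X3"
  by (auto simp: emb_def x3_def X3_def ps_mono_def fps_eq_iff fps_X_def)
lemma emb_x4: "emb x4 = X4"
  by (auto simp: emb_def x4_def X4_def ps_mono_def fps_eq_iff fps_X_def)

lemma emb_pow: "emb (ps_pow f n) = emb f ^ n"
  by (induction n) (simp_all add: ps_pow_def emb_one emb_mult)

lemma shift1: "cf (X1 * G) (a,b,c,d) = (if a = 0 then 0 else cf G (a-1,b,c,d))"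
  by (simp add: cf_def X1_def)
lemma shift2: "cf (X2 * G) (a,b,c,d) = (if b = 0 then 0 else cf G (a,b-1,c,d))"
  by (simp add: cf_def X2_def)
lemma shift3: "cf (X3 * G) (a,b,c,d) = (if c = 0 then 0 else cf G (a,b,c-1,d))"
  by (simp add: cf_def X3_def)
lemma shift4: "cf (X4 * G) (a,b,c,d) = (if d = 0 then 0 else cf G (a,b,c,d-1))"
  by (simp add: cf_def X4_def)

lemma cf_one: "cf 1 (a,b,c,d) = (if a = 0 \<and> b = 0 \<and> c = 0 \<and> d = 0 then 1 else 0)"
  by (simp add: cf_def)




definition Pz :: "int \<Rightarrow> int \<Rightarrow> nat \<Rightarrow> int" where
  "Pz a b k = (if a < 0 \<or> b < 0 then 0 else int (P (nat a) (nat b) k))"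

lemma Pz_big: "int k > a \<Longrightarrow> Pz a b k = 0"
  by (auto simp: Pz_def P_big)

lemma U_rec:
  assumes "a \<ge> 0" "b \<ge> 0"
  shows "Pz a b k - Pz (a-1) b k - Pz a (b-1) k =
    (if k = 0 then (if a = 0 \<and> b = 0 then 1 else 0) else Pz (a-1) (b-1) (k-1))"
proof -
  obtain a' b' where ab: "a = int a'" "b = int b'" using assms by (metis nonneg_eq_int)
  show ?thesis
  proof (cases a')
    case 0 then show ?thesis using ab by (cases b') (auto simp: Pz_def P_zero_left)
  next
    case (Suc a'')
    show ?thesis
    proof (cases b')
      case 0 then show ?thesis using ab Suc by (auto simp: Pz_def P_zero_right)
    next
      case (Suc b'')
      show ?thesis
      proof (cases k)
        case 0
        have h: "nat (1 + int a'') = Suc a''" "nat (1 + int b'') = Suc b''" by auto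
        show ?thesis using ab Suc \<open>a' = Suc a''\<close> 0 by (simp add: Pz_def P_def h)
      next
        case (Suc k')
        have "P (Suc a'') (Suc b'') (Suc k') = P a'' (Suc b'') (Suc k') + P (Suc a'') b'' (Suc k') + P a'' b'' k'"
          by (rule P_rec)
        moreover have h: "nat (1 + int a'') = Suc a''" "nat (1 + int b'') = Suc b''" by auto
        ultimately show ?thesis using ab Suc \<open>a' = Suc a''\<close> \<open>b' = Suc b''\<close> by (simp add: Pz_def h)
      qed
    qed
  qed
qed




definition Bz :: "nat \<Rightarrow> int \<Rightarrow> int \<Rightarrow> int \<Rightarrow> int \<Rightarrow> int" where
  "Bz M a b c d = (\<Sum>k\<le>M. Pz a b k * Pz c d k)"

lemma Bz_mono: "M \<le> M' \<Longrightarrow> a \<le> int M \<Longrightarrow> Bz M' a b c d = Bz M a b c d"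
  unfolding Bz_def by (rule sum.mono_neutral_right) (auto simp: Pz_big)

lemma Bz_bound: "a \<le> int M \<Longrightarrow> a \<le> int M' \<Longrightarrow> Bz M a b c d = Bz M' a b c d"
  by (metis Bz_mono nle_le)

definition Bf :: ps4 where
  "Bf = (\<lambda>(a,b,c,d). Bz a (int a) (int b) (int c) (int d))"

lemma Bz_shift:
  "Bz (Suc a) (int a - int i) (int b - int j) (int c - int k) (int d - int l) =
    (if i \<le> a \<and> j \<le> b \<and> k \<le> c \<and> l \<le> d then Bf (a-i,b-j,c-k,d-l) else 0)"
proof (cases "i \<le> a \<and> j \<le> b \<and> k \<le> c \<and> l \<le> d")
  case True
  then have "Bz (Suc a) (int (a-i)) (int (b-j)) (int (c-k)) (int (d-l)) = Bz (a-i) (int (a-i)) (int (b-j)) (int (c-k)) (int (d-l))"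
    by (intro Bz_bound) auto
  then show ?thesis using True by (simp add: Bf_def of_nat_diff)
next
  case False
  then show ?thesis by (auto simp: Bz_def Pz_def)
qed

definition Dm :: F4 where "Dm = (1 - X1 - X2) * (1 - X3 - X4) - X1 * X2 * (X3 * X4)"

lemma emb_denomA: "emb denomA = Dm"
  by (simp add: denomA_def Dm_def emb_diff emb_mult emb_one emb_x1 emb_x2 emb_x3 emb_x4)

lemma Dm_expand: "Dm * G = G - X1*G - X2*G - X3*G - X4*G + X1*(X3*G) + X1*(X4*G)
   + X2*(X3*G) + X2*(X4*G) - X1*(X2*(X3*(X4*G)))"
  by (simp add: Dm_def algebra_simps)

lemma Dm_Bf: "cf (Dm * emb Bf) (a,b,c,d) = cf 1 (a,b,c,d)"
proof -
  let ?G = "emb Bf"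
  let ?B = "\<lambda>i j k l. Bz (Suc a) (int a - int i) (int b - int j) (int c - int k) (int d - int l)"
  have e0: "cf ?G (a,b,c,d) = ?B 0 0 0 0" using Bz_shift[of a 0 b 0 c 0 d 0] by simp
  have e1: "cf (X1*?G) (a,b,c,d) = ?B 1 0 0 0" using Bz_shift[of a 1 b 0 c 0 d 0] by (simp add: shift1)
  have e2: "cf (X2*?G) (a,b,c,d) = ?B 0 1 0 0" using Bz_shift[of a 0 b 1 c 0 d 0] by (simp add: shift2)
  have e3: "cf (X3*?G) (a,b,c,d) = ?B 0 0 1 0" using Bz_shift[of a 0 b 0 c 1 d 0] by (simp add: shift3)
  have e4: "cf (X4*?G) (a,b,c,d) = ?B 0 0 0 1" using Bz_shift[of a 0 b 0 c 0 d 1] by (simp add: shift4)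
  have e13: "cf (X1*(X3*?G)) (a,b,c,d) = ?B 1 0 1 0" using Bz_shift[of a 1 b 0 c 1 d 0] by (simp add: shift1 shift3)
  have e14: "cf (X1*(X4*?G)) (a,b,c,d) = ?B 1 0 0 1" using Bz_shift[of a 1 b 0 c 0 d 1] by (simp add: shift1 shift4)
  have e23: "cf (X2*(X3*?G)) (a,b,c,d) = ?B 0 1 1 0" using Bz_shift[of a 0 b 1 c 1 d 0] by (simp add: shift2 shift3)
  have e24: "cf (X2*(X4*?G)) (a,b,c,d) = ?B 0 1 0 1" using Bz_shift[of a 0 b 1 c 0 d 1] by (simp add: shift2 shift4)
  have e1234: "cf (X1*(X2*(X3*(X4*?G)))) (a,b,c,d) = ?B 1 1 1 1"
    using Bz_shift[of a 1 b 1 c 1 d 1] by (simp add: shift1 shift2 shift3 shift4)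
  define A where "A = int a"
  define B where "B = int b"
  define C where "C = int c"
  define D where "D = int d"
  define U where "U = (\<lambda>x y k. Pz x y k - Pz (x-1) y k - Pz x (y-1) k)"
  have "cf (Dm * ?G) (a,b,c,d) = ?B 0 0 0 0 - ?B 1 0 0 0 - ?B 0 1 0 0 - ?B 0 0 1 0 - ?B 0 0 0 1
     + ?B 1 0 1 0 + ?B 1 0 0 1 + ?B 0 1 1 0 + ?B 0 1 0 1 - ?B 1 1 1 1"
    unfolding Dm_expand by (simp add: e0 e1 e2 e3 e4 e13 e14 e23 e24 e1234 del: cf_emb)
  also have "\<dots> = (\<Sum>k\<le>Suc a. U A B k * U C D k) - (\<Sum>k\<le>Suc a. Pz (A-1) (B-1) k * Pz (C-1) (D-1) k)"
    unfolding U_def Bz_def A_def B_def C_def D_def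
    by (simp add: sum_subtractf sum.distrib algebra_simps)
  also have "\<dots> = cf 1 (a,b,c,d)"
  proof -
    have u: "U x y k = (if k = 0 then (if x = 0 \<and> y = 0 then 1 else 0) else Pz (x-1) (y-1) (k-1))"
      if "x \<ge> 0" "y \<ge> 0" for x y k using U_rec[OF that] by (simp add: U_def)
    have nn: "A \<ge> 0" "B \<ge> 0" "C \<ge> 0" "D \<ge> 0" by (auto simp: A_def B_def C_def D_def)
    have s1: "(\<Sum>k\<le>Suc a. U A B k * U C D k) = U A B 0 * U C D 0 + (\<Sum>k\<le>a. U A B (Suc k) * U C D (Suc k))"
      by (rule sum.atMost_Suc_shift)
    have s2: "(\<Sum>k\<le>Suc a. Pz (A-1) (B-1) k * Pz (C-1) (D-1) k) = (\<Sum>k\<le>a. Pz (A-1) (B-1) k * Pz (C-1) (D-1) k)"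
      using Pz_big[of "A-1" "Suc a" "B-1"] by (simp add: A_def)
    show ?thesis unfolding s1 s2 using nn
      by (simp add: u cf_one A_def B_def C_def D_def)
  qed
  finally show ?thesis .
qed

lemma Dm_Bf': "Dm * emb Bf = 1"
proof -
  have "cf (Dm * emb Bf) = cf 1" by (auto intro!: ext simp: Dm_Bf)
  then show ?thesis by (metis emb_cf)
qed

lemma coeffA_Bf: "coeffA = Bf"
  unfolding coeffA_def
proof (rule the_equality)
  show "ps_mult denomA Bf = ps_one"
    by (rule emb_inj) (simp add: emb_mult emb_denomA Dm_Bf' emb_one)
next
  fix g assume "ps_mult denomA g = ps_one"
  then have h: "Dm * emb g = 1" by (metis emb_mult emb_denomA emb_one)
  have "emb g = emb g * (Dm * emb Bf)" by (simp add: Dm_Bf')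
  also have "\<dots> = (Dm * emb g) * emb Bf" by (simp add: algebra_simps)
  also have "\<dots> = emb Bf" using h by simp
  finally show "g = Bf" by (rule emb_inj)
qed

lemma Bf_formula: "Bf (n1,n2,n3,n4) = int (\<Sum>k\<in>{0..min n1 n3}. (n1 choose k) * (n3 choose k)
                  * ((n1 + n2 - k) choose n1) * ((n3 + n4 - k) choose n3))"
proof -
  have "Bf (n1,n2,n3,n4) = (\<Sum>k\<le>n1. int (P n1 n2 k * P n3 n4 k))"
    by (simp add: Bf_def Bz_def Pz_def)
  also have "\<dots> = (\<Sum>k\<in>{0..min n1 n3}. int (P n1 n2 k * P n3 n4 k))"
    by (rule sum.mono_neutral_right) (auto simp: P_big)
  finally show ?thesis by (simp add: P_def algebra_simps)
qed




lemma cf_X1pow: "cf (X1^i * G) (a,b,c,d) = (if i \<le> a then cf G (a-i,b,c,d) else 0)"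
proof (induction i arbitrary: a)
  case (Suc i) then show ?case by (auto simp: mult.assoc shift1)
qed simp
lemma cf_X2pow: "cf (X2^i * G) (a,b,c,d) = (if i \<le> b then cf G (a,b-i,c,d) else 0)"
proof (induction i arbitrary: b)
  case (Suc i) then show ?case by (auto simp: mult.assoc shift2)
qed simp
lemma cf_X3pow: "cf (X3^i * G) (a,b,c,d) = (if i \<le> c then cf G (a,b,c-i,d) else 0)"
proof (induction i arbitrary: c)
  case (Suc i) then show ?case by (auto simp: mult.assoc shift3)
qed simp
lemma cf_X4pow: "cf (X4^i * G) (a,b,c,d) = (if i \<le> d then cf G (a,b,c,d-i) else 0)"
proof (induction i arbitrary: d)
  case (Suc i) then show ?case by (auto simp: mult.assoc shift4)
qed simp

definition mon :: "nat \<Rightarrow> nat \<Rightarrow> nat \<Rightarrow> nat \<Rightarrow> F4" where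
  "mon i j k l = X1^i * X2^j * X3^k * X4^l"

lemma cf_mon_mult: "cf (mon i j k l * G) (a,b,c,d) =
  (if i \<le> a \<and> j \<le> b \<and> k \<le> c \<and> l \<le> d then cf G (a-i,b-j,c-k,d-l) else 0)"
  by (simp add: mon_def mult.assoc cf_X1pow cf_X2pow cf_X3pow cf_X4pow)

lemma cf_mon: "cf (mon i j k l) (a,b,c,d) = (if i = a \<and> j = b \<and> k = c \<and> l = d then 1 else 0)"
  using cf_mon_mult[of i j k l 1 a b c d] by (auto simp: cf_one)

lemma cf_of_nat_mult: "cf (of_nat m * G) n = int m * cf G n"
  by (cases n) (simp add: cf_def)

lemma cf_sum: "cf (sum f S) n = (\<Sum>x\<in>S. cf (f x) n)"
  by (cases n) (simp add: cf_def fps_sum_nth)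

lemma delta_lem: "(\<Sum>i\<le>(m::nat). (if i = a \<and> m - i = b then f i else 0)) = (if a + b = m then f a else (0::int))"
proof -
  have "(\<Sum>i\<le>m. (if i = a \<and> m - i = b then f i else 0)) =
        (\<Sum>i\<le>m. (if i = a then (if m - a = b then f a else 0) else 0))"
    by (rule sum.cong) auto
  also have "\<dots> = (if a \<in> {..m} then (if m - a = b then f a else 0) else 0)"
    by (subst sum.delta) simp_all
  also have "\<dots> = (if a + b = m then f a else 0)" by auto
  finally show ?thesis .
qed

lemma L12: "cf ((X1+X2)^m * (X3+X4)^m') (a,b,c,d) =
   (if a+b = m \<and> c+d = m' then int ((m choose a) * (m' choose c)) else 0)"
proof -
  have e: "(X1+X2)^m * (X3+X4)^m' = (\<Sum>i\<le>m. \<Sum>j\<le>m'. of_nat ((m choose i) * (m' choose j)) * mon i (m-i) j (m'-j))"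
    by (simp add: binomial_ring sum_product mon_def algebra_simps)
  have "cf ((X1+X2)^m * (X3+X4)^m') (a,b,c,d) =
     (\<Sum>i\<le>m. \<Sum>j\<le>m'. (if i = a \<and> m - i = b then int (m choose i) else 0) *
         (if j = c \<and> m' - j = d then int (m' choose j) else 0))"
    unfolding e cf_sum cf_of_nat_mult cf_mon
    by (intro sum.cong refl) auto
  also have "\<dots> = (\<Sum>i\<le>m. (if i = a \<and> m - i = b then int (m choose i) else 0)) *
         (\<Sum>j\<le>m'. (if j = c \<and> m' - j = d then int (m' choose j) else 0))"
    by (simp add: sum_product)
  also have "\<dots> = (if a+b = m \<and> c+d = m' then int ((m choose a) * (m' choose c)) else 0)"
    unfolding delta_lem by auto
  finally show ?thesis .
qed




lemma emb_numerA: "emb (numerA n1 n2 n3 n4) =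
  ((X1+X2+X3)^n1 * (X1+X2)^n2) * ((X3+X4)^n3 * (X2+X3+X4)^n4)"
  by (simp add: numerA_def emb_mult emb_pow emb_add emb_x1 emb_x2 emb_x3 emb_x4)

lemma A1: "(X1+X2+X3)^n1 * (X1+X2)^n2 = (\<Sum>k\<le>n1. of_nat (n1 choose k) * X3^k * (X1+X2)^(n1+n2-k))"
proof -
  have "(X1+X2+X3)^n1 = (X3 + (X1+X2))^n1" by (simp add: algebra_simps)
  also have "\<dots> = (\<Sum>k\<le>n1. of_nat (n1 choose k) * X3^k * (X1+X2)^(n1-k))" by (rule binomial_ring)
  finally have "(X1+X2+X3)^n1 * (X1+X2)^n2 = (\<Sum>k\<le>n1. of_nat (n1 choose k) * X3^k * (X1+X2)^(n1-k) * (X1+X2)^n2)"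
    by (simp add: sum_distrib_right)
  also have "\<dots> = (\<Sum>k\<le>n1. of_nat (n1 choose k) * X3^k * (X1+X2)^(n1+n2-k))"
  proof (rule sum.cong)
    fix k assume "k \<in> {..n1}"
    then have "n1 + n2 - k = (n1 - k) + n2" by auto
    then show "of_nat (n1 choose k) * X3^k * (X1+X2)^(n1-k) * (X1+X2)^n2 = of_nat (n1 choose k) * X3^k * (X1+X2)^(n1+n2-k)"
      by (simp add: power_add mult.assoc)
  qed simp
  finally show ?thesis .
qed

lemma A2: "(X3+X4)^n3 * (X2+X3+X4)^n4 = (\<Sum>k\<le>n4. of_nat (n4 choose k) * X2^k * (X3+X4)^(n3+n4-k))"
proof -
  have "(X2+X3+X4)^n4 = (X2 + (X3+X4))^n4" by (simp add: algebra_simps)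
  also have "\<dots> = (\<Sum>k\<le>n4. of_nat (n4 choose k) * X2^k * (X3+X4)^(n4-k))" by (rule binomial_ring)
  finally have "(X3+X4)^n3 * (X2+X3+X4)^n4 = (\<Sum>k\<le>n4. of_nat (n4 choose k) * X2^k * (X3+X4)^(n4-k) * (X3+X4)^n3)"
    by (simp add: sum_distrib_left mult.commute)
  also have "\<dots> = (\<Sum>k\<le>n4. of_nat (n4 choose k) * X2^k * (X3+X4)^(n3+n4-k))"
  proof (rule sum.cong)
    fix k assume "k \<in> {..n4}"
    then have "n3 + n4 - k = (n4 - k) + n3" by auto
    then show "of_nat (n4 choose k) * X2^k * (X3+X4)^(n4-k) * (X3+X4)^n3 = of_nat (n4 choose k) * X2^k * (X3+X4)^(n3+n4-k)"
      by (simp add: power_add mult.assoc)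
  qed simp
  finally show ?thesis .
qed

lemma numerA_Bf: "numerA n1 n2 n3 n4 (n1,n2,n3,n4) = Bf (n1,n2,n3,n4)"
proof -
  define g where "g = (\<lambda>k. if k \<le> n2 \<and> k \<le> n3 then
     int ((n1 choose k) * (n4 choose k) * ((n1+n2-k) choose n1) * ((n3+n4-k) choose (n3-k))) else 0)"
  have E: "emb (numerA n1 n2 n3 n4) = (\<Sum>k\<le>n1. \<Sum>k'\<le>n4. of_nat ((n1 choose k) * (n4 choose k')) *
      (mon 0 k' k 0 * ((X1+X2)^(n1+n2-k) * (X3+X4)^(n3+n4-k'))))"
    unfolding emb_numerA A1 A2 sum_product
    by (intro sum.cong refl) (simp add: mon_def ac_simps)
  have "numerA n1 n2 n3 n4 (n1,n2,n3,n4) = cf (emb (numerA n1 n2 n3 n4)) (n1,n2,n3,n4)" by simp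
  also have "\<dots> = (\<Sum>k\<le>n1. \<Sum>k'\<le>n4. (if k' = k then g k else 0))"
    unfolding E cf_sum cf_of_nat_mult cf_mon_mult L12
  proof (intro sum.cong refl)
    fix k k' assume k: "k \<in> {..n1}" and k': "k' \<in> {..n4}"
    show "int ((n1 choose k) * (n4 choose k')) *
          (if 0 \<le> n1 \<and> k' \<le> n2 \<and> k \<le> n3 \<and> 0 \<le> n4
           then if n1 - 0 + (n2 - k') = n1 + n2 - k \<and> n3 - k + (n4 - 0) = n3 + n4 - k'
                then int ((n1 + n2 - k choose (n1 - 0)) * (n3 + n4 - k' choose (n3 - k))) else 0
           else 0) = (if k' = k then g k else 0)"
    proof (cases "k' = k")
      case True
      show ?thesis
      proof (cases "k \<le> n2 \<and> k \<le> n3")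
        case c: True
        have h1: "n1 - 0 + (n2 - k) = n1 + n2 - k" "n3 - k + (n4 - 0) = n3 + n4 - k" using c by auto
        show ?thesis unfolding True h1 using c by (simp add: g_def ac_simps)
      next
        case c: False
        show ?thesis unfolding True using c by (auto simp: g_def)
      qed
    next
      case False
      have "\<not> (k' \<le> n2 \<and> n1 - 0 + (n2 - k') = n1 + n2 - k)" using k False by auto
      then show ?thesis using False by auto
    qed
  qed
  also have "\<dots> = (\<Sum>k\<le>n1. if k \<le> n4 then g k else 0)"
    by (intro sum.cong refl) (subst sum.delta; simp)
  also have "\<dots> = (\<Sum>k\<le>n1. int (P n1 n2 k * P n3 n4 k))"
  proof (intro sum.cong refl)
    fix k assume "k \<in> {..n1}"
    show "(if k \<le> n4 then g k else 0) = int (P n1 n2 k * P n3 n4 k)"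
    proof (cases "k \<le> n2 \<and> k \<le> n3 \<and> k \<le> n4")
      case True
      have "P n3 n4 k = P n4 n3 k" by (rule P_sym)
      also have "\<dots> = (n4 choose k) * ((n3+n4-k) choose (n3-k))"
      proof -
        have a: "n4 \<le> n3+n4-k" "n3+n4-k-n4 = n3-k" using True by auto
        have "(n3+n4-k) choose n4 = (n3+n4-k) choose (n3-k)"
          using binomial_symmetric[OF a(1)] a(2) by simp
        then show ?thesis by (simp add: P_def add.commute)
      qed
      finally show ?thesis using True by (simp add: g_def P_def)
    next
      case False
      then have "P n1 n2 k * P n3 n4 k = 0" by (auto simp: P_T)
      then show ?thesis using False by (auto simp: g_def)
    qed
  qed
  also have "\<dots> = Bf (n1,n2,n3,n4)" by (simp add: Bf_def Bz_def Pz_def)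
  finally show ?thesis .
qed

theorem mainTheorem2:
  fixes n1 n2 n3 n4 :: nat
  shows "coeffA (n1,n2,n3,n4) =
           int (\<Sum>k\<in>{0..min n1 n3}. (n1 choose k) * (n3 choose k)
                  * ((n1 + n2 - k) choose n1) * ((n3 + n4 - k) choose n3))
       \<and> coeffA (n1,n2,n3,n4) = numerA n1 n2 n3 n4 (n1,n2,n3,n4)"
  by (simp add: coeffA_Bf Bf_formula numerA_Bf)

end
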